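(* Let $n\ge 0$ and let $H^n$ be the graded ring defined below. The only invertible elements of degree $0$ in the center of $H^n$ are $1$ and $-1$; that is, the group of units of the degree $0$ part $Z_0(H^n)$ of the center of $H^n$ is $\{\pm 1\}$.
   Context: Let $\mathcal{A}=\mathbb{Z}[X]/(X^2)$, graded by $\deg 1=-1$, $\deg X=1$; it is a commutative Frobenius algebra with counit $\epsilon(1)=0,\ \epsilon(X)=1$ and comultiplication $\Delta(1)=1\otimes X+X\otimes 1$, $\Delta(X)=X\otimes X$. Let $F$ be the associated $(1+1)$-dimensional TQFT: it assigns $\mathcal{A}^{\otimes k}$ to a disjoint union of $k$ planar circles, and to cobordisms the maps built from multiplication (merging two circles), $\Delta$ (splitting), the unit (birth) and $\epsilon$ (death). For a graded abelian group $M$, $M\{i\}$ denotes the shifted group with $M\{i\}_j=M_{j-i}$. A crossingless matching of $2n$ points is a collection of $n$ disjoint arcs in the lower half-plane (a flat tangle with no bottom endpoints and $2n$ top endpoints); let $B^n$ be the set of these. For a flat tangle $a$, $W(a)$ denotes its reflection in a horizontal line; for $a,b\in B^n$, $W(b)a$ ($W(b)$ placed on top of $a$) is a disjoint union of circles. Define $H^n=\bigoplus_{a,b\in B^n}{}_b(H^n)_a$ with ${}_b(H^n)_a=F(W(b)a)\{n\}$. Multiplication ${}_c(H^n)_b\otimes{}_d(H^n)_a\to H^n$ is zero if $b\neq d$, and for $b=d$ is the map $F(W(c)b)\otimes F(W(b)a)\to F(W(c)a)$ induced by the minimal saddle cobordism from $W(c)b\,W(b)a$ to $W(c)a$ which contracts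 the arcs of $b$ against their mirror images in $W(b)$. This makes $H^n$ an associative unital graded ring (nonnegatively graded), with unit $\sum_a e_a$, where $e_a=1\otimes\cdots\otimes 1\in{}_a(H^n)_a$. *)

theory Defs
  imports Main
begin

text \<open>The $2n$ top endpoints are the natural numbers $0,\dots,2n-1$. A crossingless
matching is a fixed-point-free involution of $\{0..<2n\}$ (identity outside) whose arcs
do not cross (i.e. are nested or disjoint), which is exactly the condition that the
arcs can be drawn disjointly in the lower half-plane.\<close>

definition Bn :: "nat \<Rightarrow> (nat \<Rightarrow> nat) set" where
  "Bn n = {a. (\<forall>i<2*n. a i < 2*n \<and> a i \<noteq> i \<and> a (a i) = i)
             \<and> (\<forall>i. 2*n \<le> i \<longrightarrow> a i = i)
             \<and> (\<forall>i j k l. i < j \<and> a i = j \<and> k < l \<and> a k = l \<and> i < k \<and> k < j \<longrightarrow> l < j)}"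

text \<open>Adjacency of the gluing points along the arcs of a and of W(b); the circles of
W(b)a are the connected components.\<close>

definition pt_adj :: "nat \<Rightarrow> (nat \<Rightarrow> nat) \<Rightarrow> (nat \<Rightarrow> nat) \<Rightarrow> nat \<Rightarrow> nat \<Rightarrow> bool" where
  "pt_adj n a b i j \<longleftrightarrow> i < 2*n \<and> (j = a i \<or> j = b i)"

definition circles :: "nat \<Rightarrow> (nat \<Rightarrow> nat) \<Rightarrow> (nat \<Rightarrow> nat) \<Rightarrow> nat set set" where
  "circles n a b = (\<lambda>i. {j. (pt_adj n a b)\<^sup>*\<^sup>* i j}) ` {0..<2*n}"

text \<open>A basis element of $F(W(b)a)=\mathcal{A}^{\otimes k}$ is a choice of $1$ or $X$
for each circle; we encode it as a labelling of the points (True = X, False = 1),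
constant along circles and False outside $\{0..<2n\}$.\<close>

definition lab_ok :: "nat \<Rightarrow> (nat \<Rightarrow> nat) \<Rightarrow> (nat \<Rightarrow> nat) \<Rightarrow> (nat \<Rightarrow> bool) \<Rightarrow> bool" where
  "lab_ok n a b s \<longleftrightarrow> (\<forall>i j. (pt_adj n a b)\<^sup>*\<^sup>* i j \<longrightarrow> s i = s j) \<and> (\<forall>i. 2*n \<le> i \<longrightarrow> \<not> s i)"

definition labs :: "nat \<Rightarrow> (nat \<Rightarrow> nat) \<Rightarrow> (nat \<Rightarrow> nat) \<Rightarrow> (nat \<Rightarrow> bool) set" where
  "labs n a b = {s. lab_ok n a b s}"

text \<open>Basis of $H^n$: triples (b, a, s) standing for the basis element s of
${}_b(H^n)_a = F(W(b)a)\{n\}$.\<close>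

type_synonym hbasis = "(nat \<Rightarrow> nat) \<times> (nat \<Rightarrow> nat) \<times> (nat \<Rightarrow> bool)"

definition basis :: "nat \<Rightarrow> hbasis set" where
  "basis n = {(b, a, s). b \<in> Bn n \<and> a \<in> Bn n \<and> lab_ok n a b s}"

text \<open>Degree: deg 1 = -1, deg X = 1, tensor degrees add, then shift by {n}.\<close>

definition hdeg :: "nat \<Rightarrow> hbasis \<Rightarrow> int" where
  "hdeg n x = (case x of (b, a, s) \<Rightarrow>
     int n + (\<Sum>C\<in>circles n a b. if (\<exists>i\<in>C. s i) then 1 else -1))"

text \<open>Intermediate diagrams: vertices (False,i) are the points between a and W(b),
vertices (True,i) the points between b and W(c). S is the set of endpoints of arcs of b
already contracted by a saddle; for such an arc the two b-arcs are replaced by the two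
vertical strands.\<close>

definition gadj :: "nat \<Rightarrow> (nat \<Rightarrow> nat) \<Rightarrow> (nat \<Rightarrow> nat) \<Rightarrow> (nat \<Rightarrow> nat) \<Rightarrow> nat set
                    \<Rightarrow> bool \<times> nat \<Rightarrow> bool \<times> nat \<Rightarrow> bool" where
  "gadj n a b c S v w \<longleftrightarrow> snd v < 2*n \<and>
     (if fst v then
        w = (True, c (snd v)) \<or> (snd v \<in> S \<and> w = (False, snd v)) \<or> (snd v \<notin> S \<and> w = (True, b (snd v)))
      else
        w = (False, a (snd v)) \<or> (snd v \<in> S \<and> w = (True, snd v)) \<or> (snd v \<notin> S \<and> w = (False, b (snd v))))"

text \<open>Basis labellings of the state space of an intermediate diagram (one tensor factor
of A per circle = connected component).\<close>

definition glab_ok :: "nat \<Rightarrow> (nat \<Rightarrow> nat) \<Rightarrow> (nat \<Rightarrow> nat) \<Rightarrow> (nat \<Rightarrow> nat) \<Rightarrow> nat set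
                       \<Rightarrow> (bool \<times> nat \<Rightarrow> bool) \<Rightarrow> bool" where
  "glab_ok n a b c S m \<longleftrightarrow> (\<forall>v w. (gadj n a b c S)\<^sup>*\<^sup>* v w \<longrightarrow> m v = m w) \<and>
                         (\<forall>l i. 2*n \<le> i \<longrightarrow> \<not> m (l, i))"

text \<open>Matrix coefficient of one saddle (along the arc {i, b i} of b) from basis labelling l
of the diagram with contracted set S to basis labelling m of the diagram with contracted
set S \<union> {i, b i}: multiplication if two circles merge, comultiplication if one circle
splits, identity on all other circles.\<close>

definition saddle_coef :: "nat \<Rightarrow> (nat \<Rightarrow> nat) \<Rightarrow> (nat \<Rightarrow> nat) \<Rightarrow> (nat \<Rightarrow> nat) \<Rightarrow> nat set \<Rightarrow> nat
                          \<Rightarrow> (bool \<times> nat \<Rightarrow> bool) \<Rightarrow> (bool \<times> nat \<Rightarrow> bool) \<Rightarrow> int" where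
  "saddle_coef n a b c S i l m =
    (let j = b i; S' = S \<union> {i, j}; R = (gadj n a b c S)\<^sup>*\<^sup>*; v1 = (False, i); v2 = (True, i) in
     if \<not> glab_ok n a b c S' m then 0
     else if (\<exists>v. \<not> R v1 v \<and> \<not> R v2 v \<and> l v \<noteq> m v) then 0
     else if \<not> R v1 v2 then
       (if l v1 \<and> l v2 then 0 else if m (False, i) = (l v1 \<or> l v2) then 1 else 0)
     else
       (if l v1 then (if m (False, i) \<and> m (False, j) then 1 else 0)
        else (if m (False, i) \<noteq> m (False, j) then 1 else 0)))"

definition saddle_step :: "nat \<Rightarrow> (nat \<Rightarrow> nat) \<Rightarrow> (nat \<Rightarrow> nat) \<Rightarrow> (nat \<Rightarrow> nat) \<Rightarrow> nat set \<Rightarrow> nat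
                          \<Rightarrow> ((bool \<times> nat \<Rightarrow> bool) \<Rightarrow> int) \<Rightarrow> ((bool \<times> nat \<Rightarrow> bool) \<Rightarrow> int)" where
  "saddle_step n a b c S i v =
     (\<lambda>m. \<Sum>l\<in>{l. glab_ok n a b c S l}. v l * saddle_coef n a b c S i l m)"

fun run_saddles :: "nat \<Rightarrow> (nat \<Rightarrow> nat) \<Rightarrow> (nat \<Rightarrow> nat) \<Rightarrow> (nat \<Rightarrow> nat) \<Rightarrow> nat set \<Rightarrow> nat list
                    \<Rightarrow> ((bool \<times> nat \<Rightarrow> bool) \<Rightarrow> int) \<Rightarrow> ((bool \<times> nat \<Rightarrow> bool) \<Rightarrow> int)" where
  "run_saddles n a b c S [] v = v"
| "run_saddles n a b c S (i # is) v =
     run_saddles n a b c (S \<union> {i, b i}) is (saddle_step n a b c S i v)"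

text \<open>The arcs of b, each listed by its left endpoint (order irrelevant for the TQFT map).\<close>

definition arcs :: "nat \<Rightarrow> (nat \<Rightarrow> nat) \<Rightarrow> nat list" where
  "arcs n b = [i \<leftarrow> [0..<2*n]. i < b i]"

text \<open>Coefficient of the basis element r of F(W(c)a) in the image of s \<otimes> t, where s is
a basis element of F(W(c)b) and t of F(W(b)a).\<close>

definition cob :: "nat \<Rightarrow> (nat \<Rightarrow> nat) \<Rightarrow> (nat \<Rightarrow> nat) \<Rightarrow> (nat \<Rightarrow> nat)
                  \<Rightarrow> (nat \<Rightarrow> bool) \<Rightarrow> (nat \<Rightarrow> bool) \<Rightarrow> (nat \<Rightarrow> bool) \<Rightarrow> int" where
  "cob n c b a s t r =
     run_saddles n a b c {} (arcs n b)
       (\<lambda>l. if l = (\<lambda>(up, i). if up then s i else t i) then 1 else 0)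
       (\<lambda>(up, i). r i)"

definition Hn :: "nat \<Rightarrow> (hbasis \<Rightarrow> int) set" where
  "Hn n = {h. \<forall>x. x \<notin> basis n \<longrightarrow> h x = 0}"

definition hmult :: "nat \<Rightarrow> (hbasis \<Rightarrow> int) \<Rightarrow> (hbasis \<Rightarrow> int) \<Rightarrow> (hbasis \<Rightarrow> int)" where
  "hmult n h g = (\<lambda>(c, a, r). if (c, a, r) \<in> basis n then
      (\<Sum>b\<in>Bn n. \<Sum>s\<in>labs n c b. \<Sum>t\<in>labs n b a. h (c, b, s) * g (b, a, t) * cob n c b a s t r)
    else 0)"

text \<open>The unit \<Sum>_a e_a with e_a = 1 \<otimes> ... \<otimes> 1 in {}_a(H^n)_a.\<close>

definition hone :: "nat \<Rightarrow> hbasis \<Rightarrow> int" where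
  "hone n = (\<lambda>(b, a, s). if b = a \<and> a \<in> Bn n \<and> s = (\<lambda>_. False) then 1 else 0)"

definition Z0 :: "nat \<Rightarrow> (hbasis \<Rightarrow> int) set" where
  "Z0 n = {h \<in> Hn n. (\<forall>x. h x \<noteq> 0 \<longrightarrow> hdeg n x = 0) \<and> (\<forall>g\<in>Hn n. hmult n h g = hmult n g h)}"

end

theory Submission
  imports Defs "HOL-Library.FuncSet"
begin

lemma Bn_facts:
  assumes "b \<in> Bn n"
  shows "\<And>i. i < 2*n \<Longrightarrow> b i < 2*n" "\<And>i. i < 2*n \<Longrightarrow> b i \<noteq> i"
        "\<And>i. i < 2*n \<Longrightarrow> b (b i) = i" "\<And>i. 2*n \<le> i \<Longrightarrow> b i = i"
  using assms unfolding Bn_def by auto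

lemma Bn_invol: "b \<in> Bn n \<Longrightarrow> b (b i) = i"
  using Bn_facts[of b n] by (cases "i < 2*n") (auto simp: not_less)

lemma finite_boolfuns: "finite {s::nat \<Rightarrow> bool. \<forall>i. N \<le> i \<longrightarrow> \<not> s i}"
proof -
  have "{s::nat \<Rightarrow> bool. \<forall>i. N \<le> i \<longrightarrow> \<not> s i} \<subseteq> (\<lambda>X i. i \<in> X) ` Pow {..<N}"
  proof
    fix s :: "nat \<Rightarrow> bool" assume "s \<in> {s. \<forall>i. N \<le> i \<longrightarrow> \<not> s i}"
    then have "{i. s i} \<in> Pow {..<N}" by (auto simp: not_le[symmetric])
    moreover have "s = (\<lambda>i. i \<in> {i. s i})" by auto
    ultimately show "s \<in> (\<lambda>X i. i \<in> X) ` Pow {..<N}" by blast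
  qed
  then show ?thesis by (rule finite_subset) auto
qed

lemma finite_labs: "finite (labs n a b)"
  by (rule finite_subset[OF _ finite_boolfuns[of "2*n"]]) (auto simp: labs_def lab_ok_def)

lemma finite_glab: "finite {m. glab_ok n a b c S m}"
proof -
  have "{m. glab_ok n a b c S m} \<subseteq> (\<lambda>X v. v \<in> X) ` Pow (UNIV \<times> {..<2*n})"
  proof
    fix m :: "bool \<times> nat \<Rightarrow> bool" assume "m \<in> {m. glab_ok n a b c S m}"
    then have "{v. m v} \<in> Pow (UNIV \<times> {..<2*n})" by (auto simp: glab_ok_def not_le[symmetric])
    moreover have "m = (\<lambda>v. v \<in> {v. m v})" by auto
    ultimately show "m \<in> (\<lambda>X v. v \<in> X) ` Pow (UNIV \<times> {..<2*n})" by blast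
  qed
  then show ?thesis by (rule finite_subset) auto
qed

lemma finite_Bn: "finite (Bn n)"
proof -
  have "Bn n \<subseteq> (\<lambda>g i. if i < 2*n then g i else i) ` (\<Pi>\<^sub>E i\<in>{..<2*n}. {..<2*n})"
  proof
    fix f assume f: "f \<in> Bn n"
    have "restrict f {..<2*n} \<in> (\<Pi>\<^sub>E i\<in>{..<2*n}. {..<2*n})" using Bn_facts(1)[OF f] by auto
    moreover have "f = (\<lambda>i. if i < 2*n then restrict f {..<2*n} i else i)"
      using Bn_facts(4)[OF f] by (auto simp: fun_eq_iff)
    ultimately show "f \<in> (\<lambda>g i. if i < 2*n then g i else i) ` (\<Pi>\<^sub>E i\<in>{..<2*n}. {..<2*n})" by blast
  qed
  then show ?thesis by (rule finite_subset) (auto intro: finite_PiE)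
qed

definition stdm :: "nat \<Rightarrow> nat \<Rightarrow> nat" where
  "stdm n i = (if i < 2*n then (if even i then i + 1 else i - 1) else i)"

lemma stdm_Bn: "stdm n \<in> Bn n"
  unfolding Bn_def stdm_def
  apply (auto)
  apply presburger+
  done

lemma lab_ok_sym: "lab_ok n a b s = lab_ok n b a s"
proof -
  have "pt_adj n a b = pt_adj n b a" by (auto simp: pt_adj_def fun_eq_iff)
  then show ?thesis by (simp add: lab_ok_def)
qed

lemma lab_ok_False: "lab_ok n a b (\<lambda>_. False)"
  by (simp add: lab_ok_def)

lemma lab_ok_adj:
  assumes "lab_ok n a b t" "k < 2*n"
  shows "t (a k) = t k" "t (b k) = t k"
proof -
  have "(pt_adj n a b)\<^sup>*\<^sup>* k (a k)" "(pt_adj n a b)\<^sup>*\<^sup>* k (b k)"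
    using assms(2) by (auto simp: pt_adj_def)
  then show "t (a k) = t k" "t (b k) = t k" using assms(1) unfolding lab_ok_def by metis+
qed


lemma pt_sym: "a \<in> Bn n \<Longrightarrow> b \<in> Bn n \<Longrightarrow> pt_adj n a b i j \<Longrightarrow> pt_adj n a b j i"
  unfolding pt_adj_def using Bn_facts[of a n] Bn_facts[of b n] by auto

lemma R_sym:
  assumes "a \<in> Bn n" "b \<in> Bn n" "(pt_adj n a b)\<^sup>*\<^sup>* i j" shows "(pt_adj n a b)\<^sup>*\<^sup>* j i"
  using assms(3)
proof (induction rule: rtranclp_induct)
  case base then show ?case by simp
next
  case (step y z)
  then show ?case using pt_sym[OF assms(1,2) step(2)]
    by (meson converse_rtranclp_into_rtranclp)
qed

lemma R_bound:
  assumes "a \<in> Bn n" "b \<in> Bn n" "(pt_adj n a b)\<^sup>*\<^sup>* i j" "i < 2*n" shows "j < 2*n"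
  using assms(3,4)
  by (induction rule: rtranclp_induct) (auto simp: pt_adj_def dest: Bn_facts(1)[OF assms(1)] Bn_facts(1)[OF assms(2)])

lemma R_trans: "(r)\<^sup>*\<^sup>* i j \<Longrightarrow> r\<^sup>*\<^sup>* j k \<Longrightarrow> r\<^sup>*\<^sup>* i k" by auto

lemma circ_props:
  assumes a: "a \<in> Bn n" and b: "b \<in> Bn n"
  defines "circ \<equiv> circles n a b"
  shows "finite circ" "\<And>C. C \<in> circ \<Longrightarrow> finite C \<and> 2 \<le> card C"
    "(\<Sum>C\<in>circ. card C) = 2*n" "card circ \<le> n"
    "\<And>i. i < 2*n \<Longrightarrow> {j. (pt_adj n a b)\<^sup>*\<^sup>* i j} \<in> circ"
proof -
  let ?R = "(pt_adj n a b)\<^sup>*\<^sup>*"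
  let ?K = "\<lambda>i. {j. ?R i j}"
  have cd: "circ = ?K ` {0..<2*n}" by (simp add: circ_def circles_def)
  show fin: "finite circ" by (simp add: cd)
  show "\<And>i. i < 2*n \<Longrightarrow> ?K i \<in> circ" by (simp add: cd)
  have Ksub: "?K i \<subseteq> {0..<2*n}" if "i < 2*n" for i using R_bound[OF a b _ that] by auto
  have C2: "finite C \<and> 2 \<le> card C" if "C \<in> circ" for C
  proof -
    from that obtain i where i0: "i \<in> {0..<2*n}" "C = ?K i" unfolding cd by blast
    then have i: "i < 2*n" "C = ?K i" by auto
    have "finite C" using Ksub[OF i(1)] i(2) finite_subset by blast
    moreover have "{i, a i} \<subseteq> C" using i a by (auto simp: pt_adj_def)
    moreover have "card {i, a i} = 2" using Bn_facts(2)[OF a i(1)] by auto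
    ultimately show ?thesis by (metis card_mono)
  qed
  then show "\<And>C. C \<in> circ \<Longrightarrow> finite C \<and> 2 \<le> card C" .
  have disj: "pairwise disjnt circ"
    unfolding pairwise_def disjnt_def
  proof (intro ballI impI)
    fix C D assume "C \<in> circ" "D \<in> circ" "C \<noteq> D"
    then obtain i j where ij: "C = ?K i" "D = ?K j" using cd by auto
    show "C \<inter> D = {}"
    proof (rule ccontr)
      assume "C \<inter> D \<noteq> {}"
      then obtain k where "?R i k" "?R j k" using ij by auto
      then have "?R i j" "?R j i" using R_sym[OF a b] by (meson R_trans)+
      then have "C = D" using ij by (auto intro: R_trans)
      then show False using \<open>C \<noteq> D\<close> by simp
    qed
  qed
  have U: "\<Union>circ = {0..<2*n}"
  proof
    show "\<Union>circ \<subseteq> {0..<2*n}" using R_bound[OF a b] cd by auto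
    show "{0..<2*n} \<subseteq> \<Union>circ" using cd by auto
  qed
  have "card (\<Union>circ) = (\<Sum>C\<in>circ. card C)"
    by (rule card_Union_disjoint[OF disj]) (use C2 in auto)
  then show sc: "(\<Sum>C\<in>circ. card C) = 2*n" using U by simp
  have "(\<Sum>C\<in>circ. 2) \<le> (\<Sum>C\<in>circ. card C)" by (rule sum_mono) (use C2 in auto)
  then show "card circ \<le> n" using sc by simp
qed

lemma circ_eq:
  assumes a: "a \<in> Bn n" and b: "b \<in> Bn n" and c: "card (circles n a b) = n"
  shows "a = b"
proof -
  let ?R = "(pt_adj n a b)\<^sup>*\<^sup>*"
  let ?K = "\<lambda>i. {j. ?R i j}"
  note P = circ_props[OF a b]
  have "(\<Sum>C\<in>circles n a b. card C - 2) = (\<Sum>C\<in>circles n a b. card C) - (\<Sum>C\<in>circles n a b. 2)"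
    by (rule sum_subtractf_nat) (use P(2) in auto)
  also have "\<dots> = 0" using P(3) c by simp
  finally have "\<forall>C\<in>circles n a b. card C - 2 = 0" using P(1) by simp
  then have c2: "\<forall>C\<in>circles n a b. card C = 2" using P(2) by (metis diff_is_0_eq le_antisym)
  show "a = b"
  proof
    fix i show "a i = b i"
    proof (cases "i < 2*n")
      case True
      have "finite (?K i)" using P(2)[OF P(5)[OF True]] by simp
      moreover have "card (?K i) = 2" using c2 P(5)[OF True] by blast
      moreover have "{i, a i} \<subseteq> ?K i" "b i \<in> ?K i" by (auto simp: pt_adj_def True)
      moreover have "card {i, a i} = 2" using Bn_facts(2)[OF a True] by auto
      ultimately have "?K i = {i, a i}" "b i \<in> ?K i" by (metis card_subset_eq)+
      then show ?thesis using Bn_facts(2)[OF b True] by auto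
    next
      case False then show ?thesis using Bn_facts(4)[OF a] Bn_facts(4)[OF b] by simp
    qed
  qed
qed

lemma deg_main:
  assumes a: "a \<in> Bn n" and b: "b \<in> Bn n" and s: "lab_ok n a b s" and d: "hdeg n (b, a, s) = 0"
  shows "a = b \<and> s = (\<lambda>_. False)"
proof -
  let ?C = "circles n a b"
  let ?f = "\<lambda>C. if (\<exists>i\<in>C. s i) then (1::int) else -1"
  note P = circ_props[OF a b]
  have sumf: "(\<Sum>C\<in>?C. ?f C) = - int n" using d by (simp add: hdeg_def)
  have "(\<Sum>C\<in>?C. ?f C + 1) = (\<Sum>C\<in>?C. ?f C) + int (card ?C)" by (simp add: sum.distrib)
  also have "\<dots> \<le> 0" using sumf P(4) by simp
  finally have le0: "(\<Sum>C\<in>?C. ?f C + 1) \<le> 0" .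
  have nn: "\<And>C. 0 \<le> ?f C + 1" by simp
  have "(\<Sum>C\<in>?C. ?f C + 1) = 0" using le0 sum_nonneg[of ?C "\<lambda>C. ?f C + 1", OF nn] by linarith
  then have all0: "\<forall>C\<in>?C. ?f C + 1 = 0" using sum_nonneg_eq_0_iff[OF P(1), of "\<lambda>C. ?f C + 1"] nn by blast
  have "(\<Sum>C\<in>?C. ?f C) = (\<Sum>C\<in>?C. -1)" by (rule sum.cong) (use all0 in fastforce)+
  then have "(\<Sum>C\<in>?C. ?f C) = - int (card ?C)" by simp
  then have "card ?C = n" using sumf by simp
  then have "a = b" using circ_eq[OF a b] by simp
  moreover have "s = (\<lambda>_. False)"
  proof
    fix i show "s i = False"
    proof (cases "i < 2*n")
      case True
      then have "?f {j. (pt_adj n a b)\<^sup>*\<^sup>* i j} + 1 = 0" using all0 P(5) by blast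
      then show ?thesis by (auto split: if_splits)
    next
      case False then show ?thesis using s by (simp add: lab_ok_def)
    qed
  qed
  ultimately show ?thesis by simp
qed

lemma deg_diag:
  assumes a: "a \<in> Bn n"
  shows "hdeg n (a, a, (\<lambda>_. False)) = 0"
proof -
  let ?R = "(pt_adj n a a)\<^sup>*\<^sup>*"
  note P = circ_props[OF a a]
  have K: "{j. ?R i j} = {i, a i}" if i: "i < 2*n" for i
  proof
    show "{i, a i} \<subseteq> {j. ?R i j}" using i by (auto simp: pt_adj_def)
    have "?R i j \<Longrightarrow> j \<in> {i, a i}" for j
      by (induction rule: rtranclp_induct) (auto simp: pt_adj_def Bn_invol[OF a])
    then show "{j. ?R i j} \<subseteq> {i, a i}" by auto
  qed
  have "\<forall>C\<in>circles n a a. card C = 2"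
  proof
    fix C assume "C \<in> circles n a a"
    then obtain i where i: "i < 2*n" "C = {j. ?R i j}" by (auto simp: circles_def)
    have "card {i, a i} = 2" using Bn_facts(2)[OF a i(1)] by auto
    then show "card C = 2" using K[OF i(1)] i(2) by simp
  qed
  then have "(\<Sum>C\<in>circles n a a. card C) = 2 * card (circles n a a)" by simp
  then have "card (circles n a a) = n" using P(3) by simp
  then show ?thesis by (simp add: hdeg_def)
qed


definition dv :: "(bool \<times> nat \<Rightarrow> bool) \<Rightarrow> (bool \<times> nat \<Rightarrow> bool) \<Rightarrow> int" where
  "dv X = (\<lambda>l. if l = X then 1 else 0)"

definition lS1 :: "nat set \<Rightarrow> (nat \<Rightarrow> bool) \<Rightarrow> bool \<times> nat \<Rightarrow> bool" where
  "lS1 S t = (\<lambda>(up, k). if up then k \<in> S \<and> t k else t k)"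

lemma glab_okI:
  assumes "\<And>v w. gadj n a b c S v w \<Longrightarrow> m v = m w" "\<And>l i. 2*n \<le> i \<Longrightarrow> \<not> m (l, i)"
  shows "glab_ok n a b c S m"
proof -
  have "(gadj n a b c S)\<^sup>*\<^sup>* v w \<Longrightarrow> m v = m w" for v w
    by (induction rule: rtranclp_induct) (auto dest: assms(1))
  then show ?thesis using assms(2) by (auto simp: glab_ok_def)
qed

lemma glab_okD: "glab_ok n a b c S m \<Longrightarrow> (gadj n a b c S)\<^sup>*\<^sup>* v w \<Longrightarrow> m v = m w"
  unfolding glab_ok_def by (cases v; cases w) blast

lemma lab_ok_out: "lab_ok n a b t \<Longrightarrow> 2*n \<le> i \<Longrightarrow> \<not> t i"
  by (simp add: lab_ok_def)

lemma L1_glab: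
  assumes a: "a \<in> Bn n" and b: "b \<in> Bn n" and t: "lab_ok n a b t" and Scl: "\<forall>k\<in>S. b k \<in> S"
  shows "glab_ok n a b b S (lS1 S t)"
proof (rule glab_okI)
  fix v w assume e: "gadj n a b b S v w"
  obtain u k where v: "v = (u, k)" by (cases v)
  have k: "k < 2*n" using e v by (simp add: gadj_def)
  have f: "t (a k) = t k" "t (b k) = t k" using lab_ok_adj[OF t k] by auto
  have g: "b k \<in> S \<longleftrightarrow> k \<in> S" using Scl Bn_invol[OF b, of k] by metis
  show "lS1 S t v = lS1 S t w" using e v f g by (cases u) (auto simp: gadj_def lS1_def)
next
  fix l i assume "2*n \<le> i" then show "\<not> lS1 S t (l, i)" using lab_ok_out[OF t] by (simp add: lS1_def)
qed

lemma L1_coef: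
  assumes a: "a \<in> Bn n" and b: "b \<in> Bn n" and t: "lab_ok n a b t" and Scl: "\<forall>k\<in>S. b k \<in> S"
    and i: "i < 2*n" and iS: "i \<notin> S"
  shows "saddle_coef n a b b S i (lS1 S t) m = (if m = lS1 (S \<union> {i, b i}) t then 1 else 0)"
proof -
  let ?S' = "S \<union> {i, b i}"
  let ?R = "(gadj n a b b S)\<^sup>*\<^sup>*"
  let ?R' = "(gadj n a b b ?S')\<^sup>*\<^sup>*"
  let ?P = "{(True, i), (True, b i)}"
  let ?L = "lS1 S t"
  let ?L' = "lS1 ?S' t"
  have binv: "\<And>k. b (b k) = k" using Bn_invol[OF b] by blast
  have bi: "b i < 2*n" "b i \<notin> S" "b i \<noteq> i"
    using Bn_facts(1,2)[OF b i] Scl iS binv by metis+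
  have F1: "x \<in> ?P \<longleftrightarrow> y \<in> ?P" if e: "gadj n a b b S x y" for x y
  proof -
    obtain u k where x: "x = (u, k)" by (cases x)
    have "k < 2*n" using e x by (simp add: gadj_def)
    show ?thesis using e x iS bi binv by (cases u) (auto simp: gadj_def, metis+)
  qed
  have F1': "?R x y \<Longrightarrow> (x \<in> ?P \<longleftrightarrow> y \<in> ?P)" for x y
    by (induction rule: rtranclp_induct) (use F1 in auto)
  have F2: "?R' x y" if e: "gadj n a b b S x y" and xP: "x \<notin> ?P" and yP: "y \<notin> ?P" for x y
  proof -
    obtain u k where x: "x = (u, k)" by (cases x)
    have k: "k < 2*n" using e x by (simp add: gadj_def)
    have "gadj n a b b ?S' x y \<or> (u = False \<and> k \<in> {i, b i} \<and> y = (False, b k))"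
      using e x xP yP by (cases u) (auto simp: gadj_def)
    then show ?thesis
    proof
      assume "gadj n a b b ?S' x y" then show ?thesis by blast
    next
      assume h: "u = False \<and> k \<in> {i, b i} \<and> y = (False, b k)"
      have bk: "b k \<in> ?S'" "b k < 2*n" using h binv bi i by auto
      have "gadj n a b b ?S' (False, k) (True, k)" using h k by (auto simp: gadj_def)
      moreover have "gadj n a b b ?S' (True, k) (True, b k)" using k by (simp add: gadj_def)
      moreover have "gadj n a b b ?S' (True, b k) (False, b k)" using bk by (simp add: gadj_def)
      ultimately show ?thesis using h x
        by (meson converse_rtranclp_into_rtranclp r_into_rtranclp)
    qed
  qed
  have F2': "?R x y \<Longrightarrow> x \<notin> ?P \<Longrightarrow> ?R' x y" for x y
  proof (induction rule: rtranclp_induct)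
    case base then show ?case by simp
  next
    case (step y z)
    have "y \<notin> ?P" using F1' step by blast
    moreover have "z \<notin> ?P" using F1 step calculation by blast
    ultimately have "?R' y z" using F2 step by blast
    then show ?case using step by auto
  qed
  have Scl': "\<forall>k\<in>?S'. b k \<in> ?S'" using Scl binv by auto
  have LG: "glab_ok n a b b S ?L" by (rule L1_glab[OF a b t Scl])
  have L'G: "glab_ok n a b b ?S' ?L'" by (rule L1_glab[OF a b t Scl'])
  have nR: "\<not> ?R (False, i) (True, i)" using F1' by blast
  have e1: "gadj n a b b ?S' (False, i) (True, i)" using i by (simp add: gadj_def)
  have e2: "gadj n a b b ?S' (True, i) (True, b i)" using i by (simp add: gadj_def)
  have R'1: "?R' (False, i) (True, i)" using e1 by blast
  have R'2: "?R' (False, i) (True, b i)" using e1 e2 by (meson converse_rtranclp_into_rtranclp r_into_rtranclp)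
  have R2P: "?R (True, i) v \<Longrightarrow> v \<in> ?P" for v using F1' by blast
  have RP2: "?R (True, i) (True, b i)" using i by (auto simp: gadj_def)
  have tbi: "t (b i) = t i" using lab_ok_adj[OF t i] by simp
  have LL': "?L v = ?L' v" if "v \<notin> ?P" for v
    using that by (cases v) (auto simp: lS1_def)
  have key: "(glab_ok n a b b ?S' m \<and> (\<forall>v. \<not> ?R (False, i) v \<and> \<not> ?R (True, i) v \<longrightarrow> ?L v = m v)
              \<and> m (False, i) = t i) \<longleftrightarrow> m = ?L'"
  proof
    assume "m = ?L'"
    then show "glab_ok n a b b ?S' m \<and> (\<forall>v. \<not> ?R (False, i) v \<and> \<not> ?R (True, i) v \<longrightarrow> ?L v = m v)
              \<and> m (False, i) = t i"
      using L'G LL' RP2 by (auto simp: lS1_def)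
  next
    assume h: "glab_ok n a b b ?S' m \<and> (\<forall>v. \<not> ?R (False, i) v \<and> \<not> ?R (True, i) v \<longrightarrow> ?L v = m v)
              \<and> m (False, i) = t i"
    show "m = ?L'"
    proof
      fix v
      show "m v = ?L' v"
      proof (cases "v \<in> ?P")
        case True
        then have "?R' (False, i) v" using R'1 R'2 by auto
        then have "m v = t i" using h glab_okD by metis
        then show ?thesis using True tbi by (auto simp: lS1_def)
      next
        case False
        show ?thesis
        proof (cases "?R (False, i) v")
          case True
          then have "?R' (False, i) v" using F2' by blast
          then have "m v = t i" using h glab_okD by metis
          moreover have "?L v = t i" using glab_okD[OF LG True] by (simp add: lS1_def)
          ultimately show ?thesis using LL'[OF False] by simp
        next
          case nR1: False
          have "\<not> ?R (True, i) v" using R2P False by blast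
          then have "?L v = m v" using h nR1 by blast
          then show ?thesis using LL'[OF False] by simp
        qed
      qed
    qed
  qed
  have L1: "?L (False, i) = t i" "?L (True, i) = False" using iS by (auto simp: lS1_def)
  show ?thesis
    unfolding saddle_coef_def Let_def using nR L1 key[symmetric]
    by (auto simp del: Un_insert_right)
qed


lemma sum_delta_mult:
  assumes "finite A" "x \<in> A"
  shows "(\<Sum>l\<in>A. (if l = x then 1 else 0) * f l) = (f x :: int)"
proof -
  have "(\<Sum>l\<in>A. (if l = x then 1 else 0) * f l) = (\<Sum>l\<in>A. if l = x then f l else 0)"
    by (rule sum.cong) auto
  also have "\<dots> = f x" using assms by (simp add: sum.delta')
  finally show ?thesis .
qed

lemma L1_step:
  assumes a: "a \<in> Bn n" and b: "b \<in> Bn n" and t: "lab_ok n a b t" and Scl: "\<forall>k\<in>S. b k \<in> S"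
    and i: "i < 2*n" and iS: "i \<notin> S"
  shows "saddle_step n a b b S i (dv (lS1 S t)) = dv (lS1 (S \<union> {i, b i}) t)"
proof
  fix m
  have "saddle_step n a b b S i (dv (lS1 S t)) m = saddle_coef n a b b S i (lS1 S t) m"
    unfolding saddle_step_def dv_def
    by (rule sum_delta_mult[OF finite_glab]) (use L1_glab[OF a b t Scl] in simp)
  also have "\<dots> = dv (lS1 (S \<union> {i, b i}) t) m"
    using L1_coef[OF a b t Scl i iS] by (simp add: dv_def)
  finally show "saddle_step n a b b S i (dv (lS1 S t)) m = dv (lS1 (S \<union> {i, b i}) t) m" .
qed

lemma L1_run:
  assumes a: "a \<in> Bn n" and b: "b \<in> Bn n" and t: "lab_ok n a b t"
  shows "\<And>S. (\<forall>k\<in>S. b k \<in> S) \<Longrightarrow> (\<forall>j\<in>set is. j < 2*n \<and> j < b j \<and> j \<notin> S) \<Longrightarrow> distinct is \<Longrightarrow>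
    run_saddles n a b b S is (dv (lS1 S t)) = dv (lS1 (S \<union> (\<Union>j\<in>set is. {j, b j})) t)"
proof (induction "is")
  case Nil then show ?case by simp
next
  case (Cons i "is")
  have binv: "\<And>k. b (b k) = k" using Bn_invol[OF b] by blast
  have i: "i < 2*n" "i \<notin> S" "i < b i" using Cons.prems by auto
  have st: "saddle_step n a b b S i (dv (lS1 S t)) = dv (lS1 (S \<union> {i, b i}) t)"
    by (rule L1_step[OF a b t Cons.prems(1) i(1,2)])
  have p1: "\<forall>k\<in>S \<union> {i, b i}. b k \<in> S \<union> {i, b i}" using Cons.prems(1) binv by auto
  have p2: "\<forall>j\<in>set is. j < 2*n \<and> j < b j \<and> j \<notin> S \<union> {i, b i}"
  proof
    fix j assume j: "j \<in> set is"
    have "j \<noteq> i" using j Cons.prems(3) by auto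
    moreover have "j \<noteq> b i"
    proof
      assume "j = b i"
      then have "b j = i" using binv by simp
      then show False using \<open>j = b i\<close> i(3) j Cons.prems(2) by auto
    qed
    ultimately show "j < 2*n \<and> j < b j \<and> j \<notin> S \<union> {i, b i}" using j Cons.prems(2) by auto
  qed
  have "run_saddles n a b b S (i # is) (dv (lS1 S t))
      = run_saddles n a b b (S \<union> {i, b i}) is (dv (lS1 (S \<union> {i, b i}) t))"
    using st by simp
  also have "\<dots> = dv (lS1 (S \<union> {i, b i} \<union> (\<Union>j\<in>set is. {j, b j})) t)"
    by (rule Cons.IH[OF p1 p2]) (use Cons.prems(3) in simp)
  also have "S \<union> {i, b i} \<union> (\<Union>j\<in>set is. {j, b j}) = S \<union> (\<Union>j\<in>set (i # is). {j, b j})" by auto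
  finally show ?case .
qed

lemma arcs_props:
  assumes b: "b \<in> Bn n"
  shows "distinct (arcs n b)" "\<forall>j\<in>set (arcs n b). j < 2*n \<and> j < b j"
    "(\<Union>j\<in>set (arcs n b). {j, b j}) = {..<2*n}"
proof -
  show "distinct (arcs n b)" by (simp add: arcs_def)
  show "\<forall>j\<in>set (arcs n b). j < 2*n \<and> j < b j" by (simp add: arcs_def)
  show "(\<Union>j\<in>set (arcs n b). {j, b j}) = {..<2*n}"
  proof
    show "(\<Union>j\<in>set (arcs n b). {j, b j}) \<subseteq> {..<2*n}" using Bn_facts(1)[OF b] by (auto simp: arcs_def)
    show "{..<2*n} \<subseteq> (\<Union>j\<in>set (arcs n b). {j, b j})"
    proof
      fix k assume k: "k \<in> {..<2*n}"
      then have k': "k < 2*n" by simp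
      show "k \<in> (\<Union>j\<in>set (arcs n b). {j, b j})"
      proof (cases "k < b k")
        case True then show ?thesis using k' by (auto simp: arcs_def)
      next
        case False
        then have "b k < k" using Bn_facts(2)[OF b k'] by simp
        moreover have "b (b k) = k" using Bn_invol[OF b] by simp
        ultimately have "b k < 2*n \<and> b k < b (b k) \<and> (k = b k \<or> k = b (b k))"
          using Bn_facts(1)[OF b k'] by simp
        then show ?thesis by (auto simp: arcs_def)
      qed
    qed
  qed
qed

lemma cob_left_unit:
  assumes a: "a \<in> Bn n" and b: "b \<in> Bn n" and t: "lab_ok n a b t" and r: "lab_ok n a b r"
  shows "cob n b b a (\<lambda>_. False) t r = (if r = t then 1 else 0)"
proof -
  have X: "(\<lambda>l. if l = (\<lambda>(up, i). if up then False else t i) then 1 else 0) = dv (lS1 {} t)"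
    by (simp add: dv_def lS1_def)
  note AP = arcs_props[OF b]
  have "cob n b b a (\<lambda>_. False) t r = dv (lS1 ({} \<union> (\<Union>j\<in>set (arcs n b). {j, b j})) t) (\<lambda>(up, i). r i)"
    unfolding cob_def X by (subst L1_run[OF a b t]) (use AP in auto)
  also have "\<dots> = dv (lS1 {..<2*n} t) (\<lambda>(up, i). r i)" using AP(3) by simp
  also have "\<dots> = (if r = t then 1 else 0)"
  proof -
    have "((\<lambda>(up, i). r i) = lS1 {..<2*n} t) \<longleftrightarrow> r = t"
    proof
      assume h: "(\<lambda>(up, i). r i) = lS1 {..<2*n} t"
      show "r = t"
      proof
        fix k show "r k = t k" using fun_cong[OF h, of "(False, k)"] by (simp add: lS1_def)
      qed
    next
      assume "r = t"
      then show "(\<lambda>(up, i). r i) = lS1 {..<2*n} t"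
        using lab_ok_out[OF t] by (auto simp: lS1_def fun_eq_iff) (meson not_less)
    qed
    then show ?thesis by (simp add: dv_def)
  qed
  finally show ?thesis .
qed


definition lS2 :: "nat set \<Rightarrow> (nat \<Rightarrow> bool) \<Rightarrow> bool \<times> nat \<Rightarrow> bool" where
  "lS2 S s = (\<lambda>(up, k). if up then s k else k \<in> S \<and> s k)"

lemma L2_glab:
  assumes b: "b \<in> Bn n" and c: "c \<in> Bn n" and s: "lab_ok n b c s" and Scl: "\<forall>k\<in>S. b k \<in> S"
  shows "glab_ok n b b c S (lS2 S s)"
proof (rule glab_okI)
  fix v w assume e: "gadj n b b c S v w"
  obtain u k where v: "v = (u, k)" by (cases v)
  have k: "k < 2*n" using e v by (simp add: gadj_def)
  have f: "s (b k) = s k" "s (c k) = s k" using lab_ok_adj[OF s k] by auto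
  have g: "b k \<in> S \<longleftrightarrow> k \<in> S" using Scl Bn_invol[OF b, of k] by metis
  show "lS2 S s v = lS2 S s w" using e v f g by (cases u) (auto simp: gadj_def lS2_def)
next
  fix l i assume "2*n \<le> i" then show "\<not> lS2 S s (l, i)" using lab_ok_out[OF s] by (simp add: lS2_def)
qed

lemma L2_coef:
  assumes b: "b \<in> Bn n" and c: "c \<in> Bn n" and s: "lab_ok n b c s" and Scl: "\<forall>k\<in>S. b k \<in> S"
    and i: "i < 2*n" and iS: "i \<notin> S"
  shows "saddle_coef n b b c S i (lS2 S s) m = (if m = lS2 (S \<union> {i, b i}) s then 1 else 0)"
proof -
  let ?S' = "S \<union> {i, b i}"
  let ?R = "(gadj n b b c S)\<^sup>*\<^sup>*"
  let ?R' = "(gadj n b b c ?S')\<^sup>*\<^sup>*"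
  let ?P = "{(False, i), (False, b i)}"
  let ?L = "lS2 S s"
  let ?L' = "lS2 ?S' s"
  have binv: "\<And>k. b (b k) = k" using Bn_invol[OF b] by blast
  have bi: "b i < 2*n" "b i \<notin> S" "b i \<noteq> i"
    using Bn_facts(1,2)[OF b i] Scl iS binv by metis+
  have F1: "x \<in> ?P \<longleftrightarrow> y \<in> ?P" if e: "gadj n b b c S x y" for x y
  proof -
    obtain u k where x: "x = (u, k)" by (cases x)
    have "k < 2*n" using e x by (simp add: gadj_def)
    show ?thesis using e x iS bi binv by (cases u) (auto simp: gadj_def, metis+)
  qed
  have F1': "?R x y \<Longrightarrow> (x \<in> ?P \<longleftrightarrow> y \<in> ?P)" for x y
    by (induction rule: rtranclp_induct) (use F1 in auto)
  have F2: "?R' x y" if e: "gadj n b b c S x y" and xP: "x \<notin> ?P" and yP: "y \<notin> ?P" for x y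
  proof -
    obtain u k where x: "x = (u, k)" by (cases x)
    have k: "k < 2*n" using e x by (simp add: gadj_def)
    have "gadj n b b c ?S' x y \<or> (u = True \<and> k \<in> {i, b i} \<and> y = (True, b k))"
      using e x xP yP by (cases u) (auto simp: gadj_def)
    then show ?thesis
    proof
      assume "gadj n b b c ?S' x y" then show ?thesis by blast
    next
      assume h: "u = True \<and> k \<in> {i, b i} \<and> y = (True, b k)"
      have bk: "b k \<in> ?S'" "b k < 2*n" using h binv bi i by auto
      have "gadj n b b c ?S' (True, k) (False, k)" using h k by (auto simp: gadj_def)
      moreover have "gadj n b b c ?S' (False, k) (False, b k)" using k by (simp add: gadj_def)
      moreover have "gadj n b b c ?S' (False, b k) (True, b k)" using bk by (simp add: gadj_def)
      ultimately show ?thesis using h x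
        by (meson converse_rtranclp_into_rtranclp r_into_rtranclp)
    qed
  qed
  have F2': "?R x y \<Longrightarrow> x \<notin> ?P \<Longrightarrow> ?R' x y" for x y
  proof (induction rule: rtranclp_induct)
    case base then show ?case by simp
  next
    case (step y z)
    have "y \<notin> ?P" using F1' step by blast
    moreover have "z \<notin> ?P" using F1 step calculation by blast
    ultimately have "?R' y z" using F2 step by blast
    then show ?case using step by auto
  qed
  have Scl': "\<forall>k\<in>?S'. b k \<in> ?S'" using Scl binv by auto
  have LG: "glab_ok n b b c S ?L" by (rule L2_glab[OF b c s Scl])
  have L'G: "glab_ok n b b c ?S' ?L'" by (rule L2_glab[OF b c s Scl'])
  have nR: "\<not> ?R (False, i) (True, i)" using F1' by blast
  have e1: "gadj n b b c ?S' (False, i) (True, i)" using i by (simp add: gadj_def)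
  have e2: "gadj n b b c ?S' (False, i) (False, b i)" using i by (simp add: gadj_def)
  have R'1: "?R' (False, i) (True, i)" using e1 by blast
  have R'2: "?R' (False, i) (False, b i)" using e2 by blast
  have R1P: "?R (False, i) v \<Longrightarrow> v \<in> ?P" for v using F1' by blast
  have RP2: "?R (False, i) (False, b i)" using i by (auto simp: gadj_def)
  have sbi: "s (b i) = s i" using lab_ok_adj[OF s i] by simp
  have LL': "?L v = ?L' v" if "v \<notin> ?P" for v
    using that by (cases v) (auto simp: lS2_def)
  have key: "(glab_ok n b b c ?S' m \<and> (\<forall>v. \<not> ?R (False, i) v \<and> \<not> ?R (True, i) v \<longrightarrow> ?L v = m v)
              \<and> m (False, i) = s i) \<longleftrightarrow> m = ?L'"
  proof
    assume "m = ?L'"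
    then show "glab_ok n b b c ?S' m \<and> (\<forall>v. \<not> ?R (False, i) v \<and> \<not> ?R (True, i) v \<longrightarrow> ?L v = m v)
              \<and> m (False, i) = s i"
      using L'G LL' RP2 by (auto simp: lS2_def)
  next
    assume h: "glab_ok n b b c ?S' m \<and> (\<forall>v. \<not> ?R (False, i) v \<and> \<not> ?R (True, i) v \<longrightarrow> ?L v = m v)
              \<and> m (False, i) = s i"
    show "m = ?L'"
    proof
      fix v
      show "m v = ?L' v"
      proof (cases "v \<in> ?P")
        case True
        then have "?R' (False, i) v" using R'2 by auto
        then have "m v = s i" using h glab_okD by metis
        then show ?thesis using True sbi by (auto simp: lS2_def)
      next
        case False
        show ?thesis
        proof (cases "?R (True, i) v")
          case True
          then have "?R' (True, i) v" using F2' by blast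
          then have "?R' (False, i) v" using R'1 by (meson rtranclp_trans)
          then have "m v = s i" using h glab_okD by metis
          moreover have "?L v = s i" using glab_okD[OF LG True] by (simp add: lS2_def)
          ultimately show ?thesis using LL'[OF False] by simp
        next
          case nR2: False
          have "\<not> ?R (False, i) v" using R1P False by blast
          then have "?L v = m v" using h nR2 by blast
          then show ?thesis using LL'[OF False] by simp
        qed
      qed
    qed
  qed
  have L1: "?L (False, i) = False" "?L (True, i) = s i" using iS by (auto simp: lS2_def)
  show ?thesis
    unfolding saddle_coef_def Let_def using nR L1 key[symmetric]
    by (auto simp del: Un_insert_right)
qed

lemma L2_step:
  assumes b: "b \<in> Bn n" and c: "c \<in> Bn n" and s: "lab_ok n b c s" and Scl: "\<forall>k\<in>S. b k \<in> S"
    and i: "i < 2*n" and iS: "i \<notin> S"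
  shows "saddle_step n b b c S i (dv (lS2 S s)) = dv (lS2 (S \<union> {i, b i}) s)"
proof
  fix m
  have "saddle_step n b b c S i (dv (lS2 S s)) m = saddle_coef n b b c S i (lS2 S s) m"
    unfolding saddle_step_def dv_def
    by (rule sum_delta_mult[OF finite_glab]) (use L2_glab[OF b c s Scl] in simp)
  also have "\<dots> = dv (lS2 (S \<union> {i, b i}) s) m"
    using L2_coef[OF b c s Scl i iS] by (simp add: dv_def)
  finally show "saddle_step n b b c S i (dv (lS2 S s)) m = dv (lS2 (S \<union> {i, b i}) s) m" .
qed

lemma L2_run:
  assumes b: "b \<in> Bn n" and c: "c \<in> Bn n" and s: "lab_ok n b c s"
  shows "\<And>S. (\<forall>k\<in>S. b k \<in> S) \<Longrightarrow> (\<forall>j\<in>set is. j < 2*n \<and> j < b j \<and> j \<notin> S) \<Longrightarrow> distinct is \<Longrightarrow>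
    run_saddles n b b c S is (dv (lS2 S s)) = dv (lS2 (S \<union> (\<Union>j\<in>set is. {j, b j})) s)"
proof (induction "is")
  case Nil then show ?case by simp
next
  case (Cons i "is")
  have binv: "\<And>k. b (b k) = k" using Bn_invol[OF b] by blast
  have i: "i < 2*n" "i \<notin> S" "i < b i" using Cons.prems by auto
  have st: "saddle_step n b b c S i (dv (lS2 S s)) = dv (lS2 (S \<union> {i, b i}) s)"
    by (rule L2_step[OF b c s Cons.prems(1) i(1,2)])
  have p1: "\<forall>k\<in>S \<union> {i, b i}. b k \<in> S \<union> {i, b i}" using Cons.prems(1) binv by auto
  have p2: "\<forall>j\<in>set is. j < 2*n \<and> j < b j \<and> j \<notin> S \<union> {i, b i}"
  proof
    fix j assume j: "j \<in> set is"
    have "j \<noteq> i" using j Cons.prems(3) by auto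
    moreover have "j \<noteq> b i"
    proof
      assume "j = b i"
      then have "b j = i" using binv by simp
      then show False using \<open>j = b i\<close> i(3) j Cons.prems(2) by auto
    qed
    ultimately show "j < 2*n \<and> j < b j \<and> j \<notin> S \<union> {i, b i}" using j Cons.prems(2) by auto
  qed
  have "run_saddles n b b c S (i # is) (dv (lS2 S s))
      = run_saddles n b b c (S \<union> {i, b i}) is (dv (lS2 (S \<union> {i, b i}) s))"
    using st by simp
  also have "\<dots> = dv (lS2 (S \<union> {i, b i} \<union> (\<Union>j\<in>set is. {j, b j})) s)"
    by (rule Cons.IH[OF p1 p2]) (use Cons.prems(3) in simp)
  also have "S \<union> {i, b i} \<union> (\<Union>j\<in>set is. {j, b j}) = S \<union> (\<Union>j\<in>set (i # is). {j, b j})" by auto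
  finally show ?case .
qed

lemma cob_right_unit:
  assumes b: "b \<in> Bn n" and c: "c \<in> Bn n" and s: "lab_ok n b c s" and r: "lab_ok n b c r"
  shows "cob n c b b s (\<lambda>_. False) r = (if r = s then 1 else 0)"
proof -
  have X: "(\<lambda>l. if l = (\<lambda>(up, i). if up then s i else False) then 1 else 0) = dv (lS2 {} s)"
    by (simp add: dv_def lS2_def)
  note AP = arcs_props[OF b]
  have "cob n c b b s (\<lambda>_. False) r = dv (lS2 ({} \<union> (\<Union>j\<in>set (arcs n b). {j, b j})) s) (\<lambda>(up, i). r i)"
    unfolding cob_def X by (subst L2_run[OF b c s]) (use AP in auto)
  also have "\<dots> = dv (lS2 {..<2*n} s) (\<lambda>(up, i). r i)" using AP(3) by simp
  also have "\<dots> = (if r = s then 1 else 0)"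
  proof -
    have "((\<lambda>(up, i). r i) = lS2 {..<2*n} s) \<longleftrightarrow> r = s"
    proof
      assume h: "(\<lambda>(up, i). r i) = lS2 {..<2*n} s"
      show "r = s"
      proof
        fix k show "r k = s k" using fun_cong[OF h, of "(True, k)"] by (simp add: lS2_def)
      qed
    next
      assume "r = s"
      then show "(\<lambda>(up, i). r i) = lS2 {..<2*n} s"
        using lab_ok_out[OF s] by (auto simp: lS2_def fun_eq_iff) (meson not_less)
    qed
    then show ?thesis by (simp add: dv_def)
  qed
  finally show ?thesis .
qed


definition Dg :: "nat \<Rightarrow> ((nat \<Rightarrow> nat) \<Rightarrow> int) \<Rightarrow> hbasis \<Rightarrow> int" where
  "Dg n c = (\<lambda>(b, a, s). if b = a \<and> a \<in> Bn n \<and> s = (\<lambda>_. False) then c a else 0)"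

lemma sum_single:
  assumes "finite A" "x \<in> A" "\<And>y. y \<in> A \<Longrightarrow> y \<noteq> x \<Longrightarrow> f y = 0"
  shows "sum f A = f x"
proof -
  have "sum f A = f x + sum f (A - {x})" using assms(1,2) by (simp add: sum.remove)
  also have "sum f (A - {x}) = 0" using assms(3) by (intro sum.neutral) auto
  finally show ?thesis by simp
qed

lemma basis_iff: "(b, a, s) \<in> basis n \<longleftrightarrow> b \<in> Bn n \<and> a \<in> Bn n \<and> lab_ok n a b s"
  by (simp add: basis_def)

lemma labs_iff: "s \<in> labs n a b \<longleftrightarrow> lab_ok n a b s" by (simp add: labs_def)

lemma Dg_Hn: "Dg n c \<in> Hn n"
  by (auto simp: Hn_def Dg_def basis_iff lab_ok_False)

lemma Hn_out: "g \<in> Hn n \<Longrightarrow> x \<notin> basis n \<Longrightarrow> g x = 0" unfolding Hn_def mem_Collect_eq by blast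

lemma DL:
  assumes g: "g \<in> Hn n"
  shows "hmult n (Dg n c) g = (\<lambda>(x, y, r). c x * g (x, y, r))"
proof (rule ext, clarify)
  fix x y r
  show "hmult n (Dg n c) g (x, y, r) = c x * g (x, y, r)"
  proof (cases "(x, y, r) \<in> basis n")
    case False then show ?thesis using Hn_out[OF g False] by (simp add: hmult_def)
  next
    case True
    then have x: "x \<in> Bn n" and y: "y \<in> Bn n" and r: "lab_ok n y x r" by (auto simp: basis_iff)
    let ?F = "\<lambda>_::nat. False"
    have "hmult n (Dg n c) g (x, y, r) = (\<Sum>b\<in>Bn n. \<Sum>s\<in>labs n x b. \<Sum>t\<in>labs n b y.
            Dg n c (x, b, s) * g (b, y, t) * cob n x b y s t r)"
      using True by (simp add: hmult_def)
    also have "\<dots> = (\<Sum>s\<in>labs n x x. \<Sum>t\<in>labs n x y. Dg n c (x, x, s) * g (x, y, t) * cob n x x y s t r)"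
      by (rule sum_single[OF finite_Bn x]) (auto simp: Dg_def)
    also have "\<dots> = (\<Sum>t\<in>labs n x y. Dg n c (x, x, ?F) * g (x, y, t) * cob n x x y ?F t r)"
      by (rule sum_single[OF finite_labs]) (auto simp: Dg_def labs_iff lab_ok_False)
    also have "\<dots> = (\<Sum>t\<in>labs n x y. c x * g (x, y, t) * (if r = t then 1 else 0))"
    proof (rule sum.cong[OF refl])
      fix t assume "t \<in> labs n x y"
      then have "lab_ok n y x t" by (simp add: labs_iff lab_ok_sym)
      then show "Dg n c (x, x, ?F) * g (x, y, t) * cob n x x y ?F t r = c x * g (x, y, t) * (if r = t then 1 else 0)"
        using cob_left_unit[OF y x _ r] x by (simp add: Dg_def)
    qed
    also have "\<dots> = c x * g (x, y, r) * (if r = r then 1 else 0)"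
      by (rule sum_single[OF finite_labs]) (use r in \<open>auto simp: labs_iff lab_ok_sym\<close>)
    finally show ?thesis by simp
  qed
qed

lemma DR:
  assumes g: "g \<in> Hn n"
  shows "hmult n g (Dg n c) = (\<lambda>(x, y, r). g (x, y, r) * c y)"
proof (rule ext, clarify)
  fix x y r
  show "hmult n g (Dg n c) (x, y, r) = g (x, y, r) * c y"
  proof (cases "(x, y, r) \<in> basis n")
    case False then show ?thesis using Hn_out[OF g False] by (simp add: hmult_def)
  next
    case True
    then have x: "x \<in> Bn n" and y: "y \<in> Bn n" and r: "lab_ok n y x r" by (auto simp: basis_iff)
    let ?F = "\<lambda>_::nat. False"
    have "hmult n g (Dg n c) (x, y, r) = (\<Sum>b\<in>Bn n. \<Sum>s\<in>labs n x b. \<Sum>t\<in>labs n b y.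
            g (x, b, s) * Dg n c (b, y, t) * cob n x b y s t r)"
      using True by (simp add: hmult_def)
    also have "\<dots> = (\<Sum>s\<in>labs n x y. \<Sum>t\<in>labs n y y. g (x, y, s) * Dg n c (y, y, t) * cob n x y y s t r)"
      by (rule sum_single[OF finite_Bn y]) (auto simp: Dg_def)
    also have "\<dots> = (\<Sum>s\<in>labs n x y. g (x, y, s) * Dg n c (y, y, ?F) * cob n x y y s ?F r)"
      by (rule sum.cong[OF refl], rule sum_single[OF finite_labs]) (auto simp: Dg_def labs_iff lab_ok_False)
    also have "\<dots> = (\<Sum>s\<in>labs n x y. g (x, y, s) * c y * (if r = s then 1 else 0))"
    proof (rule sum.cong[OF refl])
      fix s assume "s \<in> labs n x y"
      then have "lab_ok n y x s" by (simp add: labs_iff lab_ok_sym)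
      then show "g (x, y, s) * Dg n c (y, y, ?F) * cob n x y y s ?F r = g (x, y, s) * c y * (if r = s then 1 else 0)"
        using cob_right_unit[OF y x _ r] y by (simp add: Dg_def)
    qed
    also have "\<dots> = g (x, y, r) * c y * (if r = r then 1 else 0)"
      by (rule sum_single[OF finite_labs]) (use r in \<open>auto simp: labs_iff lab_ok_sym\<close>)
    finally show ?thesis by simp
  qed
qed

lemma hone_Dg: "hone n = Dg n (\<lambda>_. 1)"
  by (auto simp: hone_def Dg_def fun_eq_iff)

lemma mhone_Dg: "(\<lambda>x. - hone n x) = Dg n (\<lambda>_. -1)"
  by (auto simp: hone_def Dg_def fun_eq_iff)

lemma Dg_cong: "(\<And>a. a \<in> Bn n \<Longrightarrow> c a = c' a) \<Longrightarrow> Dg n c = Dg n c'"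
  by (auto simp: Dg_def fun_eq_iff)

lemma Z0_diag:
  assumes h: "h \<in> Z0 n"
  shows "h = Dg n (\<lambda>a. h (a, a, (\<lambda>_. False)))"
proof (rule ext, clarify)
  fix b a s
  show "h (b, a, s) = Dg n (\<lambda>a. h (a, a, (\<lambda>_. False))) (b, a, s)"
  proof (cases "h (b, a, s) = 0")
    case False
    then have "(b, a, s) \<in> basis n" "hdeg n (b, a, s) = 0" using h by (auto simp: Z0_def Hn_def)
    then have "b \<in> Bn n" "a \<in> Bn n" "a = b \<and> s = (\<lambda>_. False)" using deg_main by (auto simp: basis_iff)
    then show ?thesis by (auto simp: Dg_def)
  next
    case True then show ?thesis by (auto simp: Dg_def)
  qed
qed

lemma Dg_const_Z0:
  shows "Dg n (\<lambda>_. k) \<in> Z0 n"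
proof -
  have "\<forall>x. Dg n (\<lambda>_. k) x \<noteq> 0 \<longrightarrow> hdeg n x = 0"
    by (auto simp: Dg_def deg_diag)
  moreover have "\<forall>g\<in>Hn n. hmult n (Dg n (\<lambda>_. k)) g = hmult n g (Dg n (\<lambda>_. k))"
    by (auto simp: DL DR fun_eq_iff)
  ultimately show ?thesis using Dg_Hn by (simp add: Z0_def)
qed

lemma Dg_sq:
  assumes "k * k = 1"
  shows "hmult n (Dg n (\<lambda>_. k)) (Dg n (\<lambda>_. k)) = hone n"
proof -
  have "hmult n (Dg n (\<lambda>_. k)) (Dg n (\<lambda>_. k)) = (\<lambda>(x, y, r). k * Dg n (\<lambda>_. k) (x, y, r))"
    by (rule DL[OF Dg_Hn])
  also have "\<dots> = hone n"
  proof (rule ext, clarify)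
    fix x y r show "k * Dg n (\<lambda>_. k) (x, y, r) = hone n (x, y, r)"
      using assms by (simp add: Dg_def hone_def)
  qed
  finally show ?thesis .
qed

theorem proposition2:
  fixes n :: nat
  shows "{h \<in> Z0 n. \<exists>g\<in>Z0 n. hmult n h g = hone n \<and> hmult n g h = hone n}
         = {hone n, (\<lambda>x. - hone n x)}"
proof
  show "{hone n, (\<lambda>x. - hone n x)} \<subseteq> {h \<in> Z0 n. \<exists>g\<in>Z0 n. hmult n h g = hone n \<and> hmult n g h = hone n}"
  proof -
    have "Dg n (\<lambda>_. k) \<in> {h \<in> Z0 n. \<exists>g\<in>Z0 n. hmult n h g = hone n \<and> hmult n g h = hone n}"
      if "k * k = 1" for k
      using Dg_const_Z0[of n k] Dg_sq[OF that, of n] by blast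
    moreover have "{hone n, (\<lambda>x. - hone n x)} = {Dg n (\<lambda>_. 1), Dg n (\<lambda>_. -1)}"
      using hone_Dg mhone_Dg by metis
    moreover have "(1::int) * 1 = 1" "(-1::int) * -1 = 1" by simp_all
    ultimately show ?thesis by (simp only: insert_subset empty_subsetI)
  qed
next
  show "{h \<in> Z0 n. \<exists>g\<in>Z0 n. hmult n h g = hone n \<and> hmult n g h = hone n} \<subseteq> {hone n, (\<lambda>x. - hone n x)}"
  proof
    fix h assume "h \<in> {h \<in> Z0 n. \<exists>g\<in>Z0 n. hmult n h g = hone n \<and> hmult n g h = hone n}"
    then obtain g where h: "h \<in> Z0 n" and g: "g \<in> Z0 n" and hg: "hmult n h g = hone n" by blast
    let ?F = "\<lambda>_::nat. False"
    define ch where "ch = (\<lambda>a. h (a, a, ?F))"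
    have hD: "h = Dg n ch" unfolding ch_def by (rule Z0_diag[OF h])
    have gH: "g \<in> Hn n" using g by (simp add: Z0_def)
    have hcen: "\<forall>x\<in>Hn n. hmult n h x = hmult n x h" using h by (simp add: Z0_def)
    have const: "ch a = ch b" if a: "a \<in> Bn n" and b: "b \<in> Bn n" for a b
    proof -
      define d where "d = (\<lambda>x. if x = (b, a, ?F) then (1::int) else 0)"
      have dH: "d \<in> Hn n" using a b by (auto simp: d_def Hn_def basis_iff lab_ok_False)
      have "hmult n h d (b, a, ?F) = hmult n d h (b, a, ?F)" using hcen dH by simp
      then show ?thesis using hD DL[OF dH, of ch] DR[OF dH, of ch] by (simp add: d_def)
    qed
    have unit: "ch a = 1 \<or> ch a = -1" if a: "a \<in> Bn n" for a
    proof -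
      have "hmult n h g (a, a, ?F) = hone n (a, a, ?F)" using hg by simp
      then have "ch a * g (a, a, ?F) = 1" using hD DL[OF gH, of ch] a by (simp add: hone_def)
      then show ?thesis unfolding zmult_eq_1_iff by blast
    qed
    have a0: "stdm n \<in> Bn n" by (rule stdm_Bn)
    show "h \<in> {hone n, (\<lambda>x. - hone n x)}"
    proof (cases "ch (stdm n) = 1")
      case True
      then have "h = Dg n (\<lambda>_. 1)" unfolding hD using const[OF _ a0] by (intro Dg_cong) simp
      then show ?thesis by (simp add: hone_Dg)
    next
      case False
      then have "ch (stdm n) = -1" using unit[OF a0] by simp
      then have "h = Dg n (\<lambda>_. -1)" unfolding hD using const[OF _ a0] by (intro Dg_cong) simp
      then show ?thesis by (simp add: mhone_Dg)
    qed
  qed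
qed

end
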